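(* Let $K\ge 2$, $m\in\{1,\dots,K-1\}$, $M=\frac{m}{K}$, and $L\in\{1,\dots,K-1\}$. For integers $0\le j\le m+1$ define $$R_K(M,L,j)=1+\frac{\sum_{i=\max(0,m-L+1)}^{\min(j-1,K-L)}\binom{K-L}{i}\binom{L-1}{m-i}+\sum_{i=\max(j,m-L)}^{\min(m,K-L-1)}\binom{K-L-1}{i}\binom{L}{m-i}}{\binom{K}{m}}.$$ Then there exists a minimizer $j^*\in\arg\min_{0\le j\le m+1}R_K(M,L,j)$ satisfying $j^*=\left\lceil m\left(1-\frac{L}{K}\right)\right\rceil$.
   Context: Binomial coefficients $\binom{a}{b}$ are $0$ when $b<0$ or $b>a$, and empty sums (upper limit smaller than lower limit) are $0$. *)

theory Defs
  imports Complex_Main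
begin

definition ibinom :: "int \<Rightarrow> int \<Rightarrow> real" where
  "ibinom a b = (if 0 \<le> b \<and> b \<le> a then real (nat a choose nat b) else 0)"

text \<open>R_K(M,L,j) with M = m/K; the index i ranges over integers (empty sum if upper < lower).\<close>
definition R :: "nat \<Rightarrow> nat \<Rightarrow> nat \<Rightarrow> int \<Rightarrow> real" where
  "R K m L j = 1 +
     ((\<Sum>i\<in>{max 0 (int m - int L + 1) .. min (j - 1) (int K - int L)}.
         ibinom (int K - int L) i * ibinom (int L - 1) (int m - i))
    + (\<Sum>i\<in>{max j (int m - int L) .. min (int m) (int K - int L - 1)}.
         ibinom (int K - int L - 1) i * ibinom (int L) (int m - i)))
     / real (K choose m)"

end

theory Submission
  imports Defs
begin

lemma key:
  fixes n L m j :: nat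
  assumes n: "n \<ge> 1" and L: "L \<ge> 1" and jm: "j \<le> m"
  shows "(n+L)*j \<ge> m*n \<Longrightarrow> real ((n-1) choose j) * real (L choose (m-j)) \<le> real (n choose j) * real ((L-1) choose (m-j))"
    and "(n+L)*j < m*n \<Longrightarrow> real (n choose j) * real ((L-1) choose (m-j)) \<le> real ((n-1) choose j) * real (L choose (m-j))"
proof -
  define x where "x = real (n choose j)"
  define y where "y = real ((n-1) choose j)"
  define u where "u = real ((L-1) choose (m-j))"
  define v where "v = real (L choose (m-j))"
  have e1: "real (n-j) * x = real n * y" unfolding x_def y_def
    using binomial_absorb_comp[of n j] by (metis of_nat_mult)
  have e2: "real (L-(m-j)) * v = real L * u" unfolding u_def v_def
    using binomial_absorb_comp[of L "m-j"] by (metis of_nat_mult)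
  have pos: "x \<ge> 0" "y \<ge> 0" "u \<ge> 0" "v \<ge> 0" unfolding x_def y_def u_def v_def by auto
  have nL: "real n * real L > 0" using n L by auto
  have main: "real n * real L * (x*u) - real n * real L * (y*v) = (real ((n+L)*j) - real (m*n)) * (x*v)"
    if "j \<le> n" "m - j \<le> L"
  proof -
    have "real n * real L * (x*u) = real n * x * (real L * u)" by simp
    also have "\<dots> = real n * x * (real (L-(m-j)) * v)" using e2 by simp
    finally have 1: "real n * real L * (x*u) = real n * real (L-(m-j)) * (x*v)" by simp
    have "real n * real L * (y*v) = real L * v * (real n * y)" by simp
    also have "\<dots> = real L * v * (real (n-j) * x)" using e1 by simp
    finally have 2: "real n * real L * (y*v) = real L * real (n-j) * (x*v)" by simp
    show ?thesis unfolding 1 2 using that jm by (simp add: of_nat_diff algebra_simps)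
  qed
  have A: "(n+L)*j \<ge> m*n \<Longrightarrow> y * v \<le> x * u"
  proof -
    assume h: "(n+L)*j \<ge> m*n"
    show ?thesis
    proof (cases "j \<le> n \<and> m - j \<le> L")
      case True
      have "real (m*n) \<le> real ((n+L)*j)" using h by (simp only: of_nat_le_iff)
      hence "(real ((n+L)*j) - real (m*n)) * (x*v) \<ge> 0" using pos by (intro mult_nonneg_nonneg) auto
      hence "real n * real L * (y*v) \<le> real n * real L * (x*u)" using main True by linarith
      thus ?thesis using nL by (simp add: mult_le_cancel_left_pos)
    next
      case False
      hence "\<not> j \<le> n \<or> \<not> m - j \<le> L" by blast
      then show ?thesis
      proof
        assume "\<not> j \<le> n" hence "x = 0" "y = 0" unfolding x_def y_def by auto
        thus ?thesis by simp
      next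
        assume "\<not> m - j \<le> L" hence "u = 0" "v = 0" unfolding u_def v_def by auto
        thus ?thesis by simp
      qed
    qed
  qed
  have B: "(n+L)*j < m*n \<Longrightarrow> x * u \<le> y * v"
  proof -
    assume h: "(n+L)*j < m*n"
    show ?thesis
    proof (cases "j \<le> n \<and> m - j \<le> L")
      case True
      have "real ((n+L)*j) < real (m*n)" using h by (simp only: of_nat_less_iff)
      hence "(real ((n+L)*j) - real (m*n)) * (x*v) \<le> 0" using pos by (intro mult_nonpos_nonneg) auto
      hence "real n * real L * (x*u) \<le> real n * real L * (y*v)" using main True by linarith
      thus ?thesis using nL by (simp add: mult_le_cancel_left_pos)
    next
      case False
      hence "\<not> j \<le> n \<or> \<not> m - j \<le> L" by blast
      then show ?thesis
      proof
        assume "\<not> j \<le> n" hence "x = 0" "y = 0" unfolding x_def y_def by auto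
        thus ?thesis by simp
      next
        assume "\<not> m - j \<le> L" hence "u = 0" "v = 0" unfolding u_def v_def by auto
        thus ?thesis by simp
      qed
    qed
  qed
  show "(n+L)*j \<ge> m*n \<Longrightarrow> real ((n-1) choose j) * real (L choose (m-j)) \<le> real (n choose j) * real ((L-1) choose (m-j))"
    using A unfolding x_def y_def u_def v_def .
  show "(n+L)*j < m*n \<Longrightarrow> real (n choose j) * real ((L-1) choose (m-j)) \<le> real ((n-1) choose j) * real (L choose (m-j))"
    using B unfolding x_def y_def u_def v_def .
qed

lemma ibinom_nat: "ibinom (int p) (int q) = real (p choose q)"
  unfolding ibinom_def by auto

theorem proposition1:
  fixes K m L :: nat
  assumes "K \<ge> 2" and "1 \<le> m" and "m \<le> K - 1" and "1 \<le> L" and "L \<le> K - 1"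
  shows "\<exists>js \<in> {0 .. int m + 1}.
           (\<forall>j \<in> {0 .. int m + 1}. R K m L js \<le> R K m L j) \<and>
           js = \<lceil>real m * (1 - real L / real K)\<rceil>"
proof -
  define n where "n = K - L"
  have n1: "n \<ge> 1" and Kn: "K = n + L" using assms unfolding n_def by auto
  define a where "a = (\<lambda>i. ibinom (int K - int L) i * ibinom (int L - 1) (int m - i))"
  define b where "b = (\<lambda>i. ibinom (int K - int L - 1) i * ibinom (int L) (int m - i))"
  define d where "d = (\<lambda>i. a i - b i)"
  define js where "js = \<lceil>real m * (1 - real L / real K)\<rceil>"
  have Kpos: "real K > 0" using assms by auto
  have jsx: "real m * (1 - real L / real K) = real (m*n) / real K"
    using Kpos unfolding Kn by (simp add: field_simps)
  have ge_iff: "js \<le> i \<longleftrightarrow> int (m*n) \<le> int K * i" for i :: int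
  proof -
    have "js \<le> i \<longleftrightarrow> real (m*n) / real K \<le> real_of_int i"
      unfolding js_def jsx by (simp add: ceiling_le_iff)
    also have "\<dots> \<longleftrightarrow> real (m*n) \<le> real K * real_of_int i" using Kpos by (simp add: field_simps)
    also have "\<dots> \<longleftrightarrow> int (m*n) \<le> int K * i"
      by (metis of_int_le_iff of_int_mult of_int_of_nat_eq)
    finally show ?thesis .
  qed
  have "real (m*n) / real K \<ge> 0" by simp
  hence js0: "js \<ge> 0" unfolding js_def jsx by linarith
  have "int m * int n \<le> (int n + int L) * int m" by (simp add: algebra_simps)
  hence jsm: "js \<le> int m" using ge_iff[of "int m"] n1 unfolding Kn by simp
  have ab: "a (int j) = real (n choose j) * real ((L-1) choose (m-j))"
    "b (int j) = real ((n-1) choose j) * real (L choose (m-j))" if "j \<le> m" for j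
  proof -
    have e1: "int K - int L = int n" "int L - 1 = int (L-1)" "int m - int j = int (m-j)"
      "int K - int L - 1 = int (n-1)" using that assms n1 unfolding n_def by auto
    show "a (int j) = real (n choose j) * real ((L-1) choose (m-j))"
      unfolding a_def e1 ibinom_nat ..
    show "b (int j) = real ((n-1) choose j) * real (L choose (m-j))"
      unfolding b_def e1(4) e1(3) ibinom_nat ..
  qed
  have dpos: "d i \<ge> 0" if h: "js \<le> i" "0 \<le> i" "i \<le> int m" for i
  proof -
    obtain j where j0: "i = int j" using h(2) nonneg_int_cases by blast
    have j: "i = int j" "j \<le> m" using j0 h by auto
    have "int (m*n) \<le> int (K*j)" using ge_iff[of i] h j by simp
    hence "(n+L)*j \<ge> m*n" unfolding Kn by (simp only: of_nat_le_iff)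
    from key(1)[OF n1 assms(4) j(2) this] show ?thesis unfolding d_def j(1) ab[OF j(2)] by simp
  qed
  have dneg: "d i \<le> 0" if h: "i < js" "0 \<le> i" "i \<le> int m" for i
  proof -
    obtain j where j0: "i = int j" using h(2) nonneg_int_cases by blast
    have j: "i = int j" "j \<le> m" using j0 h by auto
    have "int (K*j) < int (m*n)" using ge_iff[of i] h j by simp
    hence "(n+L)*j < m*n" unfolding Kn by (simp only: of_nat_less_iff)
    from key(2)[OF n1 assms(4) j(2) this] show ?thesis unfolding d_def j(1) ab[OF j(2)] by simp
  qed
  have azero: "a i = 0" if "i < int m - int L + 1 \<or> i > int K - int L" for i
    using that unfolding a_def ibinom_def by auto
  have bzero: "b i = 0" if "i < int m - int L \<or> i > int K - int L - 1" for i
    using that unfolding b_def ibinom_def by auto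
  have Aeq: "(\<Sum>i\<in>{max 0 (int m - int L + 1) .. min (j - 1) (int K - int L)}. a i) = (\<Sum>i\<in>{0..j-1}. a i)" for j
    by (rule sum.mono_neutral_left) (auto intro!: azero)
  have Beq: "(\<Sum>i\<in>{max j (int m - int L) .. min (int m) (int K - int L - 1)}. b i) = (\<Sum>i\<in>{j..int m}. b i)" for j
    by (rule sum.mono_neutral_left) (auto intro!: bzero)
  define G where "G = (\<lambda>j. \<Sum>i\<in>{0..j-1}. d i)"
  define S where "S = (\<Sum>i\<in>{0..int m}. b i)"
  have Req: "R K m L j = 1 + (S + G j) / real (K choose m)" if "0 \<le> j" "j \<le> int m + 1" for j
  proof -
    have "{0..int m} = {0..j-1} \<union> {j..int m}" using that by auto
    hence "S = (\<Sum>i\<in>{0..j-1}. b i) + (\<Sum>i\<in>{j..int m}. b i)" unfolding S_def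
      by (simp add: sum.union_disjoint)
    hence "(\<Sum>i\<in>{0..j-1}. a i) + (\<Sum>i\<in>{j..int m}. b i) = S + G j"
      unfolding G_def d_def by (simp add: sum_subtractf)
    thus ?thesis unfolding R_def a_def[symmetric] b_def[symmetric] Aeq Beq by simp
  qed
  have Gmin: "G js \<le> G j" if "0 \<le> j" "j \<le> int m + 1" for j
  proof (cases "js \<le> j")
    case True
    have "{0..j-1} = {0..js-1} \<union> {js..j-1}" using True js0 by auto
    hence "G j = G js + (\<Sum>i\<in>{js..j-1}. d i)" unfolding G_def
      by (simp add: sum.union_disjoint)
    moreover have "(\<Sum>i\<in>{js..j-1}. d i) \<ge> 0"
      by (rule sum_nonneg) (use that js0 in \<open>auto intro!: dpos\<close>)
    ultimately show ?thesis by simp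
  next
    case False
    have "{0..js-1} = {0..j-1} \<union> {j..js-1}" using False that by auto
    hence "G js = G j + (\<Sum>i\<in>{j..js-1}. d i)" unfolding G_def
      by (simp add: sum.union_disjoint)
    moreover have "(\<Sum>i\<in>{j..js-1}. d i) \<le> 0"
      by (rule sum_nonpos) (use that jsm in \<open>auto intro!: dneg\<close>)
    ultimately show ?thesis by simp
  qed
  have Cpos: "real (K choose m) > 0" using assms by simp
  show ?thesis
  proof (intro bexI conjI ballI)
    show "js \<in> {0..int m + 1}" using js0 jsm by simp
    show "js = \<lceil>real m * (1 - real L / real K)\<rceil>" by (rule js_def)
    fix j assume j: "j \<in> {0..int m + 1}"
    have "(S + G js) / real (K choose m) \<le> (S + G j) / real (K choose m)"
      using Gmin[of j] j Cpos by (simp add: divide_right_mono)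
    thus "R K m L js \<le> R K m L j" using Req[of js] Req[of j] j js0 jsm by simp
  qed
qed

end
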